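(* Let $v>3$ and let $(X,\mathcal{B})$ be a partial STS$(v)$ with $X=\{1,\dots,v\}$. Then there is a sequencing $\pi=[x_1\,x_2\,\cdots\,x_v]$ of $X$ that is $3$-good for $(X,\mathcal{B})$, i.e. $\{x_i,x_{i+1},x_{i+2}\}\notin\mathcal{B}$ for all $1\le i\le v-2$.
   Context: A partial Steiner triple system of order $v$, PSTS$(v)$, is a pair $(X,\mathcal{B})$ where $X$ is a set of $v$ points and $\mathcal{B}$ is a set of 3-subsets of $X$ (blocks) such that every pair of distinct points lies in at most one block. A sequencing of $X$ is an ordering $[x_1\,x_2\,\cdots\,x_v]$ of all points of $X$, each appearing exactly once. It is $3$-good if no three consecutive points form a block. *)

theory Defs
  imports Main
begin

definition partial_sts :: "'a set \<Rightarrow> 'a set set \<Rightarrow> bool" where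
  "partial_sts X B \<longleftrightarrow>
     (\<forall>b\<in>B. b \<subseteq> X \<and> card b = 3) \<and>
     (\<forall>x y. x \<noteq> y \<longrightarrow> card {b\<in>B. x \<in> b \<and> y \<in> b} \<le> 1)"

definition sequencing :: "'a set \<Rightarrow> 'a list \<Rightarrow> bool" where
  "sequencing X xs \<longleftrightarrow> distinct xs \<and> set xs = X"

definition three_good :: "'a set set \<Rightarrow> 'a list \<Rightarrow> bool" where
  "three_good B xs \<longleftrightarrow>
     (\<forall>i. i + 2 < length xs \<longrightarrow> {xs ! i, xs ! (i+1), xs ! (i+2)} \<notin> B)"

end

theory Submission
  imports Defs
begin

fun g :: "'a set set \<Rightarrow> 'a list \<Rightarrow> bool" where
  "g B (a#b#c#xs) = ({a,b,c} \<notin> B \<and> g B (b#c#xs))"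
| "g B _ = True"

lemma all_nat_split: "(\<forall>i::nat. P i) = (P 0 \<and> (\<forall>i. P (Suc i)))"
  by (metis not0_implies_Suc)

lemma tg_cons3: "three_good B (a#b#c#xs) = ({a,b,c} \<notin> B \<and> three_good B (b#c#xs))"
  unfolding three_good_def
  apply (subst all_nat_split)
  apply simp
  done

lemma tg_eq: "three_good B xs = g B xs"
proof (induction B xs rule: g.induct)
  case (1 B a b c xs)
  then show ?case by (simp add: tg_cons3)
next
  case ("2_1" B) then show ?case by (simp add: three_good_def)
next
  case ("2_2" B v) then show ?case by (simp add: three_good_def)
next
  case ("2_3" B v va) then show ?case by (simp add: three_good_def)
qed

locale U =
  fixes B :: "'a set set"
  assumes U: "\<And>b1 b2 p q. b1\<in>B \<Longrightarrow> b2\<in>B \<Longrightarrow> p\<noteq>q \<Longrightarrow> p\<in>b1 \<Longrightarrow> q\<in>b1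
     \<Longrightarrow> p\<in>b2 \<Longrightarrow> q\<in>b2 \<Longrightarrow> b1=b2"
begin

lemma amo:
  assumes "distinct S" "x \<notin> set S" "y \<notin> set S" "x \<noteq> y" "g B S"
    "\<not> g B (x#S)" "\<not> g B (y#S)"
  shows False
proof -
  obtain a b t where S: "S = a#b#t"
    using assms(6) by (metis g.simps(2,3,4) neq_Nil_conv)
  have "{x,a,b} \<in> B" "{y,a,b} \<in> B" using assms(5-7) S by auto
  moreover have "a \<noteq> b" using assms(1) S by auto
  ultimately have "{x,a,b} = {y,a,b}" using U by blast
  then show False using assms S by (auto simp: insert_eq_iff)
qed

lemma amo_card:
  assumes "distinct S" "g B S" "set S \<inter> R = {}" "finite R"
  shows "card {u\<in>R. \<not> g B (u#S)} \<le> 1"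
  using assms amo[of S] unfolding One_nat_def by (subst card_le_Suc0_iff_eq) auto

lemma base:
  assumes R4: "card R = 4" and fin: "finite R"
    and dS: "distinct S" and disj: "set S \<inter> R = {}" and gS: "g B S"
  shows "\<exists>r. distinct r \<and> set r = R \<and> g B (r@S)"
proof -
  define E where "E = {u\<in>R. R - {u} \<in> B}"
  have Eamo: "card E \<le> 1"
  proof -
    have "u = u'" if "u \<in> E" "u' \<in> E" for u u'
    proof (rule ccontr)
      assume ne: "u \<noteq> u'"
      have "card (R - {u,u'}) = 2" using R4 that ne fin unfolding E_def
        by (subst card_Diff_subset) auto
      then obtain p q where pq: "R - {u,u'} = {p,q}" "p \<noteq> q" by (auto simp: card_2_iff)
      have "R - {u} = R - {u'}"
        apply (rule U[of _ _ p q]) using that pq unfolding E_def by auto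
      then show False using that ne unfolding E_def by blast
    qed
    moreover have "finite E" using fin unfolding E_def by auto
    ultimately show ?thesis unfolding One_nat_def by (subst card_le_Suc0_iff_eq) auto
  qed
  define F where "F = {u\<in>R. \<not> g B (u#S)}"
  have Famo: "card F \<le> 1" unfolding F_def using amo_card assms by blast
  have "card (F \<union> E) \<le> 2"
    using card_Un_le[of F E] Eamo Famo by linarith
  moreover have "finite (F \<union> E)" using fin unfolding F_def E_def by auto
  ultimately have "\<not> R \<subseteq> F \<union> E"
    using R4 card_mono[of "F \<union> E" R] by linarith
  then obtain r4 where r4: "r4 \<in> R" "g B (r4#S)" "r4 \<notin> E" unfolding F_def by auto
  define R3 where "R3 = R - {r4}"
  have cR3: "card R3 = 3" unfolding R3_def using r4 R4 fin by auto
  have "card {u\<in>R3. \<not> g B (u#r4#S)} \<le> 1"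
    apply (rule amo_card) using dS disj r4 fin unfolding R3_def by auto
  moreover have "finite {u\<in>R3. \<not> g B (u#r4#S)}" using fin unfolding R3_def by auto
  ultimately have "\<not> R3 \<subseteq> {u\<in>R3. \<not> g B (u#r4#S)}"
    using cR3 card_mono[of "{u\<in>R3. \<not> g B (u#r4#S)}" R3] by linarith
  then obtain r3 where r3: "r3 \<in> R3" "g B (r3#r4#S)" by auto
  have "card (R3 - {r3}) = 2" using cR3 r3 fin R3_def by auto
  then obtain p1 p2 where pp: "R3 - {r3} = {p1,p2}" "p1 \<noteq> p2" by (auto simp: card_2_iff)
  have gen: "\<exists>r. distinct r \<and> set r = R \<and> g B (r@S)"
    if "r1 \<notin> E" "{r1,r2} = {p1,p2}" "r1 \<noteq> r2" for r1 r2
  proof -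
    have Rr: "R = {r1,r2,r3,r4}" using pp that r3 r4 R3_def by auto
    have d: "distinct [r1,r2,r3,r4]" using pp that r3 r4 R3_def by auto
    have e1: "{r1,r2,r3} = R - {r4}" and e2: "{r2,r3,r4} = R - {r1}" using Rr d by auto
    have r1R: "r1 \<in> R" using Rr by simp
    have n1: "{r1,r2,r3} \<notin> B" using r4(1,3) unfolding e1 E_def by simp
    have n2: "{r2,r3,r4} \<notin> B" using r1R that(1) unfolding e2 E_def by simp
    have "g B ([r1,r2,r3,r4]@S)" using n1 n2 r3(2) by simp
    moreover have "distinct [r1,r2,r3,r4]" by fact
    moreover have "set [r1,r2,r3,r4] = R" using Rr by auto
    ultimately show ?thesis by blast
  qed
  have "finite E" using fin unfolding E_def by auto
  then have "p1 \<notin> E \<or> p2 \<notin> E"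
    using Eamo pp(2) unfolding One_nat_def by (subst (asm) card_le_Suc0_iff_eq) auto
  then show ?thesis using gen[of p1 p2] gen[of p2 p1] pp by auto
qed

lemma main:
  "card R = n + 4 \<Longrightarrow> finite R \<Longrightarrow> distinct S \<Longrightarrow> set S \<inter> R = {} \<Longrightarrow> g B S
   \<Longrightarrow> \<exists>r. distinct r \<and> set r = R \<and> g B (r@S)"
proof (induction n arbitrary: R S)
  case 0
  then show ?case using base by simp
next
  case (Suc n)
  have "card {u\<in>R. \<not> g B (u#S)} \<le> 1" using amo_card Suc.prems by blast
  moreover have "finite {u\<in>R. \<not> g B (u#S)}" using Suc.prems(2) by auto
  ultimately have "\<not> R \<subseteq> {u\<in>R. \<not> g B (u#S)}"
    using Suc.prems(1) card_mono[of "{u\<in>R. \<not> g B (u#S)}" R] by linarith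
  then obtain z where z: "z \<in> R" "g B (z#S)" by auto
  have "\<exists>r. distinct r \<and> set r = R - {z} \<and> g B (r@(z#S))"
    apply (rule Suc.IH) using Suc.prems z by auto
  then obtain r where r: "distinct r" "set r = R - {z}" "g B (r@(z#S))" by blast
  show ?case
    apply (rule exI[of _ "r@[z]"]) using r z by auto
qed

end

theorem theorem2:
  fixes v :: nat and B :: "nat set set"
  assumes "v > 3"
    and "partial_sts {1..v} B"
  shows "\<exists>xs. sequencing {1..v} xs \<and> three_good B xs"
proof -
  have sub: "\<forall>b\<in>B. b \<subseteq> {1..v}" and cd: "\<And>x y. x \<noteq> y \<Longrightarrow> card {b\<in>B. x \<in> b \<and> y \<in> b} \<le> 1"
    using assms(2) unfolding partial_sts_def by auto
  have finB: "finite B"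
    by (rule finite_subset[of _ "Pow {1..v}"]) (use sub in auto)
  interpret U B
  proof
    fix b1 b2 p q
    assume h: "b1\<in>B" "b2\<in>B" "p\<noteq>q" "p\<in>b1" "q\<in>b1" "p\<in>b2" "q\<in>b2"
    have "card {b\<in>B. p \<in> b \<and> q \<in> b} \<le> Suc 0" using cd h(3) by simp
    then show "b1 = b2" using h finB by (subst (asm) card_le_Suc0_iff_eq) auto
  qed
  have "\<exists>r. distinct r \<and> set r = {1..v} \<and> g B (r@[])"
    apply (rule main[of _ "v - 4"]) using assms(1) by auto
  then show ?thesis unfolding sequencing_def by (auto simp: tg_eq)
qed

end
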